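(* Let $(\mathfrak g,D)$ be a difference Lie algebra, $\mathfrak h$ a vector space regarded as an abelian Lie algebra, $K:\mathfrak h\to\mathfrak h$ linear, and $(\mathfrak h,\varrho,K)$ a representation of $(\mathfrak g,D)$. Then isomorphism classes of abelian extensions of $(\mathfrak g,D)$ by $(\mathfrak h,K)$ whose induced representation is $\varrho$ are in bijection with $\mathcal H^2(\mathfrak g,D;\mathfrak h,\varrho,K)$, the bijection sending an extension to the class of the 2-cocycle $(\omega,\chi)$ associated with any section.
   Context: A difference Lie algebra $(\mathfrak g,D)$: a Lie algebra with linear $D$ such that $D[x,y]=[x,D(y)]-[y,D(x)]+[D(x),D(y)]$. A representation $(V,\varrho,K)$ of $(\mathfrak g,D)$: a Lie representation $\varrho:\mathfrak g\to\mathfrak{gl}(V)$ and linear $K:V\to V$ with $K(\varrho(x)u)=\varrho(D(x))u+\varrho(x)K(u)+\varrho(D(x))K(u)$. An abelian extension of $(\mathfrak g,D)$ by $(\mathfrak h,K)$ is a short exact sequence of Lie algebras $0\to\mathfrak h\xrightarrow{i}\hat{\mathfrak g}\xrightarrow{p}\mathfrak g\to0$, $\mathfrak h$ abelian, with $(\hat{\mathfrak g},\hat D)$ a difference Lie algebra and $\hat D\circ i=i\circ K$, $p\circ\hat D=D\circ p$. For a section $s$ ($p\circ s=\mathrm{Id}$), identifying $\mathfrak h$ with $i(\mathfrak h)$: the induced representation is $\varrho(x)u=[s(x),u]_{\hat{\mathfrak g}}$ (independent of $s$), and the associated cocycle is $\omega(x,y)=[s(x),s(y)]_{\hat{\mathfrak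 g}}-s([x,y])$, $\chi(x)=\hat D(s(x))-s(D(x))$. Two abelian extensions $(\hat{\mathfrak g},\hat D)$, $(\tilde{\mathfrak g},\tilde D)$ are isomorphic if there is an isomorphism of difference Lie algebras $\kappa:\tilde{\mathfrak g}\to\hat{\mathfrak g}$ (Lie algebra isomorphism with $\hat D\kappa=\kappa\tilde D$) compatible with the inclusions of $\mathfrak h$ and projections to $\mathfrak g$ (identity on $\mathfrak h$ and on $\mathfrak g$). Cohomology with coefficients in $(V,\varrho,K)$: $\mathfrak C^1=\mathrm{Hom}(\mathfrak g,V)$, $\mathfrak C^n=\mathrm{Hom}(\wedge^n\mathfrak g,V)\oplus\mathrm{Hom}(\wedge^{n-1}\mathfrak g,V)$ ($n\ge2$), $\delta_\varrho(f,\theta)=(d^{CE}_\varrho f,\partial\theta+T(f))$ ($\delta_\varrho f=(d^{CE}_\varrho f,T(f))$ for $n=1$), where $d^{CE}_\varrho$ is the Chevalley–Eilenberg differential, $\partial\theta(x_1,\dots,x_n)=\sum_i(-1)^{i+1}\varrho(x_i)\theta(\dots,\hat x_i,\dots)+\sum_i(-1)^{i+1}\varrho(D(x_i))\theta(\dots,\hat x_i,\dots)+\sum_{i<j}(-1)^{i+j}\theta([x_i,x_j],x_1,\dots,\hat x_i,\dots,\hat x_j,\dots,x_n)$, and $T(f)(x_1,\dots,x_n)=(-1)^n\big(\sum_{k=1}^n\sum_{i_1<\cdots<i_k}f(y_1,\dots,y_n)-K(f(x_1,\dots,x_n))\big)$ with $y_j=D(x_j)$ for $j\in\{i_1,\dots,i_k\}$,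 $y_j=x_j$ otherwise; $\mathcal H^2(\mathfrak g,D;V,\varrho,K)$ is the second cohomology group. *)

theory Defs
  imports Complex_Main "HOL-Library.Product_Plus"
begin

text \<open>All vector spaces are over a common field 'k, given as a type 'a of class
ab_group_add together with a scalar multiplication satisfying the locale
vector_space.  Linear maps are Vector_Spaces.linear.\<close>

definition lie_algebra :: "('k::field \<Rightarrow> 'a \<Rightarrow> 'a) \<Rightarrow> ('a::ab_group_add \<Rightarrow> 'a \<Rightarrow> 'a) \<Rightarrow> bool" where
  "lie_algebra s b \<longleftrightarrow> vector_space s
     \<and> (\<forall>y. Vector_Spaces.linear s s (\<lambda>x. b x y))
     \<and> (\<forall>x. Vector_Spaces.linear s s (b x))
     \<and> (\<forall>x. b x x = 0)
     \<and> (\<forall>x y z. b x (b y z) + b y (b z x) + b z (b x y) = 0)"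

definition diff_lie :: "('k::field \<Rightarrow> 'a \<Rightarrow> 'a) \<Rightarrow> ('a::ab_group_add \<Rightarrow> 'a \<Rightarrow> 'a) \<Rightarrow> ('a \<Rightarrow> 'a) \<Rightarrow> bool" where
  "diff_lie s b D \<longleftrightarrow> lie_algebra s b \<and> Vector_Spaces.linear s s D
     \<and> (\<forall>x y. D (b x y) = b x (D y) - b y (D x) + b (D x) (D y))"

definition diff_rep ::
  "('k::field \<Rightarrow> 'g \<Rightarrow> 'g) \<Rightarrow> ('g::ab_group_add \<Rightarrow> 'g \<Rightarrow> 'g) \<Rightarrow> ('g \<Rightarrow> 'g)
   \<Rightarrow> ('k \<Rightarrow> 'v \<Rightarrow> 'v) \<Rightarrow> ('v::ab_group_add \<Rightarrow> 'v) \<Rightarrow> ('g \<Rightarrow> 'v \<Rightarrow> 'v) \<Rightarrow> bool" where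
  "diff_rep sg bg D sv K \<rho> \<longleftrightarrow> diff_lie sg bg D \<and> vector_space sv
     \<and> (\<forall>x. Vector_Spaces.linear sv sv (\<rho> x))
     \<and> (\<forall>u. Vector_Spaces.linear sg sv (\<lambda>x. \<rho> x u))
     \<and> (\<forall>x y u. \<rho> (bg x y) u = \<rho> x (\<rho> y u) - \<rho> y (\<rho> x u))
     \<and> Vector_Spaces.linear sv sv K
     \<and> (\<forall>x u. K (\<rho> x u) = \<rho> (D x) u + \<rho> x (K u) + \<rho> (D x) (K u))"

record ('k, 'g, 'h, 'e) abext =
  esc  :: "'k \<Rightarrow> 'e \<Rightarrow> 'e"
  ebr  :: "'e \<Rightarrow> 'e \<Rightarrow> 'e"
  eD   :: "'e \<Rightarrow> 'e"
  einc :: "'h \<Rightarrow> 'e"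
  eproj :: "'e \<Rightarrow> 'g"

definition abelian_ext ::
  "('k::field \<Rightarrow> 'g \<Rightarrow> 'g) \<Rightarrow> ('g::ab_group_add \<Rightarrow> 'g \<Rightarrow> 'g) \<Rightarrow> ('g \<Rightarrow> 'g)
   \<Rightarrow> ('k \<Rightarrow> 'h \<Rightarrow> 'h) \<Rightarrow> ('h::ab_group_add \<Rightarrow> 'h)
   \<Rightarrow> ('k, 'g, 'h, 'e::ab_group_add) abext \<Rightarrow> bool" where
  "abelian_ext sg bg D sh K E \<longleftrightarrow>
     diff_lie (esc E) (ebr E) (eD E)
     \<and> Vector_Spaces.linear sh (esc E) (einc E)
     \<and> Vector_Spaces.linear (esc E) sg (eproj E)
     \<and> inj (einc E) \<and> surj (eproj E)
     \<and> range (einc E) = {e. eproj E e = 0}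
     \<and> (\<forall>u v. ebr E (einc E u) (einc E v) = 0)
     \<and> (\<forall>a b. eproj E (ebr E a b) = bg (eproj E a) (eproj E b))
     \<and> (\<forall>u. eD E (einc E u) = einc E (K u))
     \<and> (\<forall>a. eproj E (eD E a) = D (eproj E a))"

definition lin_section ::
  "('k::field \<Rightarrow> 'g::ab_group_add \<Rightarrow> 'g) \<Rightarrow> ('k, 'g, 'h, 'e::ab_group_add) abext \<Rightarrow> ('g \<Rightarrow> 'e) \<Rightarrow> bool" where
  "lin_section sg E s \<longleftrightarrow> Vector_Spaces.linear sg (esc E) s \<and> (\<forall>x. eproj E (s x) = x)"

definition induces_rep ::
  "('k::field \<Rightarrow> 'g::ab_group_add \<Rightarrow> 'g) \<Rightarrow> ('g \<Rightarrow> 'h \<Rightarrow> 'h) \<Rightarrow> ('k, 'g, 'h, 'e::ab_group_add) abext \<Rightarrow> bool" where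
  "induces_rep sg \<rho> E \<longleftrightarrow> (\<forall>s. lin_section sg E s \<longrightarrow>
      (\<forall>x u. ebr E (s x) (einc E u) = einc E (\<rho> x u)))"

definition ext_omega ::
  "('g \<Rightarrow> 'g \<Rightarrow> 'g) \<Rightarrow> ('k, 'g, 'h, 'e::ab_group_add) abext \<Rightarrow> ('g \<Rightarrow> 'e) \<Rightarrow> 'g \<Rightarrow> 'g \<Rightarrow> 'h" where
  "ext_omega bg E s x y = inv (einc E) (ebr E (s x) (s y) - s (bg x y))"

definition ext_chi ::
  "('g \<Rightarrow> 'g) \<Rightarrow> ('k, 'g, 'h, 'e::ab_group_add) abext \<Rightarrow> ('g \<Rightarrow> 'e) \<Rightarrow> 'g \<Rightarrow> 'h" where
  "ext_chi D E s x = inv (einc E) (eD E (s x) - s (D x))"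

text \<open>Cohomology.  A 2-cochain is a pair (f, theta) with f an alternating bilinear
map g x g -> V (i.e. an element of Hom(wedge^2 g, V)) and theta in Hom(g, V).\<close>

definition dCE2 :: "('g \<Rightarrow> 'g \<Rightarrow> 'g) \<Rightarrow> ('g \<Rightarrow> 'v \<Rightarrow> 'v) \<Rightarrow> ('g \<Rightarrow> 'g \<Rightarrow> 'v::ab_group_add)
   \<Rightarrow> 'g \<Rightarrow> 'g \<Rightarrow> 'g \<Rightarrow> 'v" where
  "dCE2 bg \<rho> f x y z = \<rho> x (f y z) - \<rho> y (f x z) + \<rho> z (f x y)
      - f (bg x y) z + f (bg x z) y - f (bg y z) x"

definition partial1 :: "('g \<Rightarrow> 'g \<Rightarrow> 'g) \<Rightarrow> ('g \<Rightarrow> 'g) \<Rightarrow> ('g \<Rightarrow> 'v \<Rightarrow> 'v) \<Rightarrow> ('g \<Rightarrow> 'v::ab_group_add)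
   \<Rightarrow> 'g \<Rightarrow> 'g \<Rightarrow> 'v" where
  "partial1 bg D \<rho> \<theta> x y = \<rho> x (\<theta> y) - \<rho> y (\<theta> x) + \<rho> (D x) (\<theta> y) - \<rho> (D y) (\<theta> x)
      - \<theta> (bg x y)"

text \<open>T(f) for f in Hom(wedge^2 g, V): sign (-1)^2 = 1.\<close>
definition T2 :: "('g \<Rightarrow> 'g) \<Rightarrow> ('v \<Rightarrow> 'v) \<Rightarrow> ('g \<Rightarrow> 'g \<Rightarrow> 'v::ab_group_add) \<Rightarrow> 'g \<Rightarrow> 'g \<Rightarrow> 'v" where
  "T2 D K f x y = f (D x) y + f x (D y) + f (D x) (D y) - K (f x y)"

definition cob1 :: "('g \<Rightarrow> 'g \<Rightarrow> 'g) \<Rightarrow> ('g \<Rightarrow> 'g) \<Rightarrow> ('v \<Rightarrow> 'v) \<Rightarrow> ('g \<Rightarrow> 'v \<Rightarrow> 'v)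
   \<Rightarrow> ('g \<Rightarrow> 'v::ab_group_add) \<Rightarrow> ('g \<Rightarrow> 'g \<Rightarrow> 'v) \<times> ('g \<Rightarrow> 'v)" where
  "cob1 bg D K \<rho> f = ((\<lambda>x y. \<rho> x (f y) - \<rho> y (f x) - f (bg x y)),
                      (\<lambda>x. - (f (D x) - K (f x))))"

definition cochain2 :: "('k::field \<Rightarrow> 'g::ab_group_add \<Rightarrow> 'g) \<Rightarrow> ('k \<Rightarrow> 'v \<Rightarrow> 'v)
   \<Rightarrow> ('g \<Rightarrow> 'g \<Rightarrow> 'v::ab_group_add) \<times> ('g \<Rightarrow> 'v) \<Rightarrow> bool" where
  "cochain2 sg sv c \<longleftrightarrow> (\<forall>y. Vector_Spaces.linear sg sv (\<lambda>x. fst c x y))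
     \<and> (\<forall>x. Vector_Spaces.linear sg sv (fst c x))
     \<and> (\<forall>x. fst c x x = 0)
     \<and> Vector_Spaces.linear sg sv (snd c)"

definition Z2 :: "('k::field \<Rightarrow> 'g::ab_group_add \<Rightarrow> 'g) \<Rightarrow> ('g \<Rightarrow> 'g \<Rightarrow> 'g) \<Rightarrow> ('g \<Rightarrow> 'g)
   \<Rightarrow> ('k \<Rightarrow> 'v \<Rightarrow> 'v) \<Rightarrow> ('v \<Rightarrow> 'v) \<Rightarrow> ('g \<Rightarrow> 'v \<Rightarrow> 'v)
   \<Rightarrow> (('g \<Rightarrow> 'g \<Rightarrow> 'v::ab_group_add) \<times> ('g \<Rightarrow> 'v)) set" where
  "Z2 sg bg D sv K \<rho> = {c. cochain2 sg sv c
      \<and> (\<forall>x y z. dCE2 bg \<rho> (fst c) x y z = 0)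
      \<and> (\<forall>x y. partial1 bg D \<rho> (snd c) x y + T2 D K (fst c) x y = 0)}"

definition cls2 :: "('k::field \<Rightarrow> 'g::ab_group_add \<Rightarrow> 'g) \<Rightarrow> ('g \<Rightarrow> 'g \<Rightarrow> 'g) \<Rightarrow> ('g \<Rightarrow> 'g)
   \<Rightarrow> ('k \<Rightarrow> 'v \<Rightarrow> 'v) \<Rightarrow> ('v \<Rightarrow> 'v) \<Rightarrow> ('g \<Rightarrow> 'v \<Rightarrow> 'v)
   \<Rightarrow> ('g \<Rightarrow> 'g \<Rightarrow> 'v::ab_group_add) \<times> ('g \<Rightarrow> 'v)
   \<Rightarrow> (('g \<Rightarrow> 'g \<Rightarrow> 'v) \<times> ('g \<Rightarrow> 'v)) set" where
  "cls2 sg bg D sv K \<rho> c = {c' \<in> Z2 sg bg D sv K \<rho>. \<exists>f. Vector_Spaces.linear sg sv f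
      \<and> (\<forall>x y. fst c' x y = fst c x y + fst (cob1 bg D K \<rho> f) x y)
      \<and> (\<forall>x. snd c' x = snd c x + snd (cob1 bg D K \<rho> f) x)}"

definition H2 :: "('k::field \<Rightarrow> 'g::ab_group_add \<Rightarrow> 'g) \<Rightarrow> ('g \<Rightarrow> 'g \<Rightarrow> 'g) \<Rightarrow> ('g \<Rightarrow> 'g)
   \<Rightarrow> ('k \<Rightarrow> 'v \<Rightarrow> 'v) \<Rightarrow> ('v \<Rightarrow> 'v) \<Rightarrow> ('g \<Rightarrow> 'v \<Rightarrow> 'v)
   \<Rightarrow> (('g \<Rightarrow> 'g \<Rightarrow> 'v::ab_group_add) \<times> ('g \<Rightarrow> 'v)) set set" where
  "H2 sg bg D sv K \<rho> = cls2 sg bg D sv K \<rho> ` Z2 sg bg D sv K \<rho>"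

definition ext_class :: "('k::field \<Rightarrow> 'g::ab_group_add \<Rightarrow> 'g) \<Rightarrow> ('g \<Rightarrow> 'g \<Rightarrow> 'g) \<Rightarrow> ('g \<Rightarrow> 'g)
   \<Rightarrow> ('k \<Rightarrow> 'h \<Rightarrow> 'h) \<Rightarrow> ('h \<Rightarrow> 'h) \<Rightarrow> ('g \<Rightarrow> 'h \<Rightarrow> 'h)
   \<Rightarrow> ('k, 'g, 'h::ab_group_add, 'e::ab_group_add) abext
   \<Rightarrow> (('g \<Rightarrow> 'g \<Rightarrow> 'h) \<times> ('g \<Rightarrow> 'h)) set" where
  "ext_class sg bg D sh K \<rho> E =
     (let s = (SOME s. lin_section sg E s)
      in cls2 sg bg D sh K \<rho> (ext_omega bg E s, ext_chi D E s))"

definition ext_iso :: "('k::field, 'g::ab_group_add, 'h, 'e1::ab_group_add) abext \<Rightarrow> ('k, 'g, 'h, 'e2::ab_group_add) abext \<Rightarrow> bool" where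
  "ext_iso E1 E2 \<longleftrightarrow> (\<exists>\<kappa>. bij \<kappa> \<and> Vector_Spaces.linear (esc E2) (esc E1) \<kappa>
      \<and> (\<forall>a b. \<kappa> (ebr E2 a b) = ebr E1 (\<kappa> a) (\<kappa> b))
      \<and> (\<forall>a. eD E1 (\<kappa> a) = \<kappa> (eD E2 a))
      \<and> (\<forall>u. \<kappa> (einc E2 u) = einc E1 u)
      \<and> (\<forall>a. eproj E1 (\<kappa> a) = eproj E2 a))"

end

theory Submission
  imports Defs
begin


lemma lin_add: "Vector_Spaces.linear s1 s2 f \<Longrightarrow> f (x + y) = f x + f y"
  by (simp add: linear_iff_module_hom module_hom.add)
lemma lin_scale: "Vector_Spaces.linear s1 s2 f \<Longrightarrow> f (s1 c x) = s2 c (f x)"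
  by (simp add: linear_iff_module_hom module_hom.scale)
lemma lin_0: "Vector_Spaces.linear s1 s2 f \<Longrightarrow> f 0 = 0"
  by (simp add: linear_iff_module_hom module_hom.zero)
lemma lin_neg: "Vector_Spaces.linear s1 s2 f \<Longrightarrow> f (- x) = - f x"
  by (simp add: linear_iff_module_hom module_hom.neg)
lemma lin_diff: "Vector_Spaces.linear s1 s2 f \<Longrightarrow> f (x - y) = f x - f y"
  by (simp add: linear_iff_module_hom module_hom.diff)


lemma lin_vs1: "Vector_Spaces.linear s1 s2 f \<Longrightarrow> vector_space s1" by (simp add: Vector_Spaces.linear_iff)
lemma lin_vs2: "Vector_Spaces.linear s1 s2 f \<Longrightarrow> vector_space s2" by (simp add: Vector_Spaces.linear_iff)

lemma lin_sub: "Vector_Spaces.linear s1 s2 f \<Longrightarrow> Vector_Spaces.linear s1 s2 g \<Longrightarrow>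
   Vector_Spaces.linear s1 s2 (\<lambda>x. f x - g x)"
  unfolding Vector_Spaces.linear_iff
  by (auto simp: module.scale_right_diff_distrib module_iff_vector_space algebra_simps)
lemma lin_plus: "Vector_Spaces.linear s1 s2 f \<Longrightarrow> Vector_Spaces.linear s1 s2 g \<Longrightarrow>
   Vector_Spaces.linear s1 s2 (\<lambda>x. f x + g x)"
  unfolding Vector_Spaces.linear_iff
  by (auto simp: module.scale_right_distrib module_iff_vector_space algebra_simps)
lemma lin_uminus: "Vector_Spaces.linear s1 s2 f \<Longrightarrow> Vector_Spaces.linear s1 s2 (\<lambda>x. - f x)"
  unfolding Vector_Spaces.linear_iff
  by (auto simp: module.scale_minus_right module_iff_vector_space algebra_simps)
lemma lin_comp: "Vector_Spaces.linear s1 s2 f \<Longrightarrow> Vector_Spaces.linear s2 s3 g \<Longrightarrow>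
   Vector_Spaces.linear s1 s3 (\<lambda>x. g (f x))"
  using Vector_Spaces.linear_compose[of s1 s2 f s3 g] by (simp add: o_def)
lemma lin_zero: "vector_space s1 \<Longrightarrow> vector_space s2 \<Longrightarrow> Vector_Spaces.linear s1 s2 (\<lambda>x. 0)"
  unfolding Vector_Spaces.linear_iff by (auto simp: module.scale_zero_right module_iff_vector_space)
lemma lin_id: "vector_space s1 \<Longrightarrow> Vector_Spaces.linear s1 s1 (\<lambda>x. x)"
  unfolding Vector_Spaces.linear_iff by auto

lemma lin_inv:
  assumes g: "Vector_Spaces.linear s1 s3 g" and i: "Vector_Spaces.linear s2 s3 i" and inj: "inj i"
    and r: "\<And>x. g x \<in> range i"
  shows "Vector_Spaces.linear s1 s2 (\<lambda>x. inv i (g x))"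
proof -
  have ii: "i (inv i (g x)) = g x" for x using r[of x] by (simp add: f_inv_into_f)
  show ?thesis unfolding Vector_Spaces.linear_iff
  proof (intro conjI allI)
    show "vector_space s1" using g by (simp add: Vector_Spaces.linear_iff)
    show "vector_space s2" using i by (simp add: Vector_Spaces.linear_iff)
    fix x y c
    have "i (inv i (g (x + y))) = g (x + y)" by (rule ii)
    also have "\<dots> = g x + g y" by (rule lin_add[OF g])
    also have "\<dots> = i (inv i (g x) + inv i (g y))" by (simp add: lin_add[OF i] ii)
    finally have "i (inv i (g (x + y))) = i (inv i (g x) + inv i (g y))" .
    then show "inv i (g (x + y)) = inv i (g x) + inv i (g y)" using inj by (simp add: inj_eq)
    have "i (inv i (g (s1 c x))) = g (s1 c x)" by (rule ii)
    also have "\<dots> = s3 c (g x)" by (rule lin_scale[OF g])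
    also have "\<dots> = i (s2 c (inv i (g x)))" by (simp add: lin_scale[OF i] ii)
    finally have "i (inv i (g (s1 c x))) = i (s2 c (inv i (g x)))" .
    then show "inv i (g (s1 c x)) = s2 c (inv i (g x))" using inj by (simp add: inj_eq)
  qed
qed

locale lie = fixes s :: "'k::field \<Rightarrow> 'a::ab_group_add \<Rightarrow> 'a" and b :: "'a \<Rightarrow> 'a \<Rightarrow> 'a"
  assumes lie: "lie_algebra s b"
begin
lemma vs: "vector_space s" using lie by (simp add: lie_algebra_def)
lemma linL: "Vector_Spaces.linear s s (\<lambda>x. b x y)" using lie by (simp add: lie_algebra_def)
lemma linR: "Vector_Spaces.linear s s (b x)" using lie by (simp add: lie_algebra_def)
lemma addL[simp]: "b (x + y) z = b x z + b y z" using lin_add[OF linL] by simp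
lemma addR[simp]: "b z (x + y) = b z x + b z y" using lin_add[OF linR] by simp
lemma diffL[simp]: "b (x - y) z = b x z - b y z" using lin_diff[OF linL] by simp
lemma diffR[simp]: "b z (x - y) = b z x - b z y" using lin_diff[OF linR] by simp
lemma negL[simp]: "b (- x) z = - b x z" using lin_neg[OF linL] by simp
lemma negR[simp]: "b z (- x) = - b z x" using lin_neg[OF linR] by simp
lemma zeroL[simp]: "b 0 z = 0" using lin_0[OF linL] by simp
lemma zeroR[simp]: "b z 0 = 0" using lin_0[OF linR] by simp
lemma scaleL: "b (s c x) z = s c (b x z)" using lin_scale[OF linL] by simp
lemma scaleR: "b z (s c x) = s c (b z x)" using lin_scale[OF linR] by simp
lemma alt[simp]: "b x x = 0" using lie by (simp add: lie_algebra_def)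
lemma jacobi: "b x (b y z) + b y (b z x) + b z (b x y) = 0" using lie by (simp add: lie_algebra_def)
lemma antisym: "b y x = - b x y"
proof -
  have e: "b (x + y) (x + y) = b x x + b y x + (b x y + b y y)" by (simp only: addL addR)
  have "b x y + b y x = 0" using e by (simp add: algebra_simps)
  then show ?thesis by (simp add: eq_neg_iff_add_eq_0 add.commute)
qed
end



locale rep_ctx =
  fixes sg :: "'k::field \<Rightarrow> 'g::ab_group_add \<Rightarrow> 'g" and bg :: "'g \<Rightarrow> 'g \<Rightarrow> 'g" and D :: "'g \<Rightarrow> 'g"
    and sh :: "'k \<Rightarrow> 'h::ab_group_add \<Rightarrow> 'h" and K :: "'h \<Rightarrow> 'h" and \<rho> :: "'g \<Rightarrow> 'h \<Rightarrow> 'h"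
  assumes rep: "diff_rep sg bg D sh K \<rho>"
begin
lemma dl: "diff_lie sg bg D" using rep by (simp add: diff_rep_def)
sublocale g: lie sg bg using dl by (simp add: diff_lie_def lie_def)
lemma vsh: "vector_space sh" using rep by (simp add: diff_rep_def)
lemma vsg: "vector_space sg" by (rule g.vs)
lemma linD: "Vector_Spaces.linear sg sg D" using dl by (simp add: diff_lie_def)
lemma D_br: "D (bg x y) = bg x (D y) - bg y (D x) + bg (D x) (D y)" using dl by (simp add: diff_lie_def)
lemma D_add[simp]: "D (x + y) = D x + D y" by (rule lin_add[OF linD])
lemma D_diff[simp]: "D (x - y) = D x - D y" by (rule lin_diff[OF linD])
lemma D_neg[simp]: "D (- x) = - D x" by (rule lin_neg[OF linD])
lemma D_0[simp]: "D 0 = 0" by (rule lin_0[OF linD])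
lemma linK: "Vector_Spaces.linear sh sh K" using rep by (simp add: diff_rep_def)
lemma K_add[simp]: "K (x + y) = K x + K y" by (rule lin_add[OF linK])
lemma K_diff[simp]: "K (x - y) = K x - K y" by (rule lin_diff[OF linK])
lemma K_neg[simp]: "K (- x) = - K x" by (rule lin_neg[OF linK])
lemma K_0[simp]: "K 0 = 0" by (rule lin_0[OF linK])
lemma linR: "Vector_Spaces.linear sh sh (\<rho> x)" using rep by (simp add: diff_rep_def)
lemma linL: "Vector_Spaces.linear sg sh (\<lambda>x. \<rho> x u)" using rep by (simp add: diff_rep_def)
lemma r_addR[simp]: "\<rho> x (u + v) = \<rho> x u + \<rho> x v" by (rule lin_add[OF linR])
lemma r_diffR[simp]: "\<rho> x (u - v) = \<rho> x u - \<rho> x v" by (rule lin_diff[OF linR])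
lemma r_negR[simp]: "\<rho> x (- v) = - \<rho> x v" by (rule lin_neg[OF linR])
lemma r_0R[simp]: "\<rho> x 0 = 0" by (rule lin_0[OF linR])
lemma r_addL[simp]: "\<rho> (x + y) u = \<rho> x u + \<rho> y u" using lin_add[OF linL] by simp
lemma r_diffL[simp]: "\<rho> (x - y) u = \<rho> x u - \<rho> y u" using lin_diff[OF linL] by simp
lemma r_negL[simp]: "\<rho> (- x) u = - \<rho> x u" using lin_neg[OF linL] by simp
lemma r_0L[simp]: "\<rho> 0 u = 0" using lin_0[OF linL] by simp
lemma r_br: "\<rho> (bg x y) u = \<rho> x (\<rho> y u) - \<rho> y (\<rho> x u)" using rep by (simp add: diff_rep_def)
lemma K_r: "K (\<rho> x u) = \<rho> (D x) u + \<rho> x (K u) + \<rho> (D x) (K u)" using rep by (simp add: diff_rep_def)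

lemma cob1_add:
  assumes "Vector_Spaces.linear sg sh f" "Vector_Spaces.linear sg sh f'"
  shows "fst (cob1 bg D K \<rho> (\<lambda>x. f x + f' x)) x y = fst (cob1 bg D K \<rho> f) x y + fst (cob1 bg D K \<rho> f') x y"
    "snd (cob1 bg D K \<rho> (\<lambda>x. f x + f' x)) x = snd (cob1 bg D K \<rho> f) x + snd (cob1 bg D K \<rho> f') x"
  by (simp_all add: cob1_def algebra_simps)

lemma cob1_neg:
  shows "fst (cob1 bg D K \<rho> (\<lambda>x. - f x)) x y = - fst (cob1 bg D K \<rho> f) x y"
    "snd (cob1 bg D K \<rho> (\<lambda>x. - f x)) x = - snd (cob1 bg D K \<rho> f) x"
  by (simp_all add: cob1_def algebra_simps)

lemma cls2_mem_self: "c \<in> Z2 sg bg D sh K \<rho> \<Longrightarrow> c \<in> cls2 sg bg D sh K \<rho> c"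
  unfolding cls2_def
  by (auto intro!: exI[of _ "\<lambda>x. 0"] lin_zero vsg vsh simp: cob1_def)

lemma cls2_shift:
  assumes f: "Vector_Spaces.linear sg sh f"
    and e1: "\<And>x y. fst c' x y = fst c x y + fst (cob1 bg D K \<rho> f) x y"
    and e2: "\<And>x. snd c' x = snd c x + snd (cob1 bg D K \<rho> f) x"
  shows "cls2 sg bg D sh K \<rho> c' = cls2 sg bg D sh K \<rho> c"
proof (intro set_eqI iffI)
  fix d assume "d \<in> cls2 sg bg D sh K \<rho> c'"
  then obtain g where d: "d \<in> Z2 sg bg D sh K \<rho>" "Vector_Spaces.linear sg sh g"
    "\<And>x y. fst d x y = fst c' x y + fst (cob1 bg D K \<rho> g) x y"
    "\<And>x. snd d x = snd c' x + snd (cob1 bg D K \<rho> g) x" unfolding cls2_def by auto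
  show "d \<in> cls2 sg bg D sh K \<rho> c" unfolding cls2_def
    using d e1 e2 lin_plus[OF f d(2)]
    by (auto intro!: exI[of _ "\<lambda>x. f x + g x"] simp: cob1_add[OF f d(2)] algebra_simps)
next
  fix d assume "d \<in> cls2 sg bg D sh K \<rho> c"
  then obtain g where d: "d \<in> Z2 sg bg D sh K \<rho>" "Vector_Spaces.linear sg sh g"
    "\<And>x y. fst d x y = fst c x y + fst (cob1 bg D K \<rho> g) x y"
    "\<And>x. snd d x = snd c x + snd (cob1 bg D K \<rho> g) x" unfolding cls2_def by auto
  have l: "Vector_Spaces.linear sg sh (\<lambda>x. g x - f x)" by (rule lin_sub[OF d(2) f])
  show "d \<in> cls2 sg bg D sh K \<rho> c'" unfolding cls2_def
    using d e1 e2 l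
    by (auto intro!: exI[of _ "\<lambda>x. g x - f x"] simp: cob1_def algebra_simps)
qed

end



locale ext_ctx = rep_ctx sg bg D sh K \<rho>
  for sg :: "'k::field \<Rightarrow> 'g::ab_group_add \<Rightarrow> 'g" and bg D and sh :: "'k \<Rightarrow> 'h::ab_group_add \<Rightarrow> 'h" and K \<rho> +
  fixes E :: "('k, 'g, 'h, 'e::ab_group_add) abext"
  assumes ab: "abelian_ext sg bg D sh K E" and ind: "induces_rep sg \<rho> E"
begin
lemma dlE: "diff_lie (esc E) (ebr E) (eD E)" using ab by (simp add: abelian_ext_def)
sublocale e: lie "esc E" "ebr E" using dlE by (simp add: diff_lie_def lie_def)
lemma linDE: "Vector_Spaces.linear (esc E) (esc E) (eD E)" using dlE by (simp add: diff_lie_def)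
lemma DE_br: "eD E (ebr E a b) = ebr E a (eD E b) - ebr E b (eD E a) + ebr E (eD E a) (eD E b)"
  using dlE by (simp add: diff_lie_def)
lemma DE_add[simp]: "eD E (x + y) = eD E x + eD E y" by (rule lin_add[OF linDE])
lemma DE_diff[simp]: "eD E (x - y) = eD E x - eD E y" by (rule lin_diff[OF linDE])
lemma DE_neg[simp]: "eD E (- x) = - eD E x" by (rule lin_neg[OF linDE])
lemma DE_0[simp]: "eD E 0 = 0" by (rule lin_0[OF linDE])
lemma linI: "Vector_Spaces.linear sh (esc E) (einc E)" using ab by (simp add: abelian_ext_def)
lemma I_add[simp]: "einc E (x + y) = einc E x + einc E y" by (rule lin_add[OF linI])
lemma I_diff[simp]: "einc E (x - y) = einc E x - einc E y" by (rule lin_diff[OF linI])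
lemma I_neg[simp]: "einc E (- x) = - einc E x" by (rule lin_neg[OF linI])
lemma I_0[simp]: "einc E 0 = 0" by (rule lin_0[OF linI])
lemma linP: "Vector_Spaces.linear (esc E) sg (eproj E)" using ab by (simp add: abelian_ext_def)
lemma P_add[simp]: "eproj E (x + y) = eproj E x + eproj E y" by (rule lin_add[OF linP])
lemma P_diff[simp]: "eproj E (x - y) = eproj E x - eproj E y" by (rule lin_diff[OF linP])
lemma P_neg[simp]: "eproj E (- x) = - eproj E x" by (rule lin_neg[OF linP])
lemma P_0[simp]: "eproj E 0 = 0" by (rule lin_0[OF linP])
lemma injI: "inj (einc E)" using ab by (simp add: abelian_ext_def)
lemma I_eq[simp]: "einc E u = einc E v \<longleftrightarrow> u = v" using injI by (simp add: inj_eq)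
lemma I_eq0[simp]: "einc E u = 0 \<longleftrightarrow> u = 0" using I_eq[of u 0] by simp
lemma surjP: "surj (eproj E)" using ab by (simp add: abelian_ext_def)
lemma rangeI: "range (einc E) = {e. eproj E e = 0}" using ab by (simp add: abelian_ext_def)
lemma P_I[simp]: "eproj E (einc E u) = 0" using rangeI by auto
lemma I_br[simp]: "ebr E (einc E u) (einc E v) = 0" using ab by (simp add: abelian_ext_def)
lemma P_br[simp]: "eproj E (ebr E a b) = bg (eproj E a) (eproj E b)" using ab by (simp add: abelian_ext_def)
lemma DE_I[simp]: "eD E (einc E u) = einc E (K u)" using ab by (simp add: abelian_ext_def)
lemma P_DE[simp]: "eproj E (eD E a) = D (eproj E a)" using ab by (simp add: abelian_ext_def)
lemma inv_I[simp]: "inv (einc E) (einc E u) = u" using injI by simp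
lemma I_inv: "eproj E e = 0 \<Longrightarrow> einc E (inv (einc E) e) = e"
  using rangeI by (metis (mono_tags, lifting) f_inv_into_f mem_Collect_eq)

lemma sec_exists: "\<exists>s. lin_section sg E s"
proof -
  interpret vector_space_pair "esc E" sg using e.vs vsg by (simp add: vector_space_pair_def)
  obtain g where "Vector_Spaces.linear sg (esc E) g" "eproj E \<circ> g = id"
    using linear_surjective_right_inverse[OF linP surjP] by blast
  then show ?thesis unfolding lin_section_def by (auto simp: fun_eq_iff)
qed

end

locale sec_ctx = ext_ctx sg bg D sh K \<rho> E
  for sg :: "'k::field \<Rightarrow> 'g::ab_group_add \<Rightarrow> 'g" and bg D and sh :: "'k \<Rightarrow> 'h::ab_group_add \<Rightarrow> 'h" and K \<rho>
    and E :: "('k, 'g, 'h, 'e::ab_group_add) abext" +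
  fixes s :: "'g \<Rightarrow> 'e"
  assumes sec: "lin_section sg E s"
begin
lemma linS: "Vector_Spaces.linear sg (esc E) s" using sec by (simp add: lin_section_def)
lemma S_add[simp]: "s (x + y) = s x + s y" by (rule lin_add[OF linS])
lemma S_diff[simp]: "s (x - y) = s x - s y" by (rule lin_diff[OF linS])
lemma S_neg[simp]: "s (- x) = - s x" by (rule lin_neg[OF linS])
lemma S_0[simp]: "s 0 = 0" by (rule lin_0[OF linS])
lemma P_S[simp]: "eproj E (s x) = x" using sec by (simp add: lin_section_def)
lemma SI_br[simp]: "ebr E (s x) (einc E u) = einc E (\<rho> x u)" using ind sec by (simp add: induces_rep_def)
lemma IS_br[simp]: "ebr E (einc E u) (s x) = - einc E (\<rho> x u)" using e.antisym SI_br by metis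

abbreviation "om \<equiv> ext_omega bg E s"
abbreviation "ch \<equiv> ext_chi D E s"

lemma I_om: "einc E (om x y) = ebr E (s x) (s y) - s (bg x y)"
  unfolding ext_omega_def by (rule I_inv) simp
lemma I_ch: "einc E (ext_chi D E s x) = eD E (s x) - s (D x)"
  unfolding ext_chi_def by (rule I_inv) simp
lemma SS_br: "ebr E (s x) (s y) = s (bg x y) + einc E (om x y)" by (simp add: I_om)
lemma DE_S: "eD E (s x) = s (D x) + einc E (ch x)" by (simp add: I_ch)

lemma decomp: "e = s (eproj E e) + einc E (inv (einc E) (e - s (eproj E e)))"
  by (subst I_inv) auto

lemma br_formula: "ebr E (s x + einc E u) (s y + einc E v) = s (bg x y) + einc E (om x y + \<rho> x v - \<rho> y u)"
  by (simp add: SS_br algebra_simps)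
lemma D_formula: "eD E (s x + einc E u) = s (D x) + einc E (ch x + K u)"
  by (simp add: DE_S algebra_simps)

end



context sec_ctx begin

lemma I_r: "einc E (\<rho> x u) = ebr E (s x) (einc E u)" by simp

lemma g_jac: "bg (bg x y) z - bg (bg x z) y + bg (bg y z) x = 0"
proof -
  have "bg x (bg y z) + bg y (bg z x) + bg z (bg x y) = 0" by (rule g.jacobi)
  moreover have "bg (bg x y) z - bg (bg x z) y + bg (bg y z) x = - (bg x (bg y z) + bg y (bg z x) + bg z (bg x y))"
    using g.antisym[of "bg y z" x] g.antisym[of "bg x z" y] g.antisym[of x z] g.antisym[of "bg x y" z]
    by (simp add: algebra_simps)
  ultimately show ?thesis by simp
qed

lemma e_jac: "ebr E a (ebr E b c) - ebr E b (ebr E a c) + ebr E c (ebr E a b) = 0"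
proof -
  have "ebr E a (ebr E b c) + ebr E b (ebr E c a) + ebr E c (ebr E a b) = 0" by (rule e.jacobi)
  then show ?thesis using e.antisym[of a c] by (simp add: algebra_simps)
qed

lemma cocycle1: "dCE2 bg \<rho> om x y z = 0"
proof -
  have "einc E (dCE2 bg \<rho> om x y z) =
     (ebr E (s x) (ebr E (s y) (s z)) - ebr E (s y) (ebr E (s x) (s z)) + ebr E (s z) (ebr E (s x) (s y)))
     - (ebr E (s x) (s (bg y z)) + ebr E (s (bg y z)) (s x))
     + (ebr E (s y) (s (bg x z)) + ebr E (s (bg x z)) (s y))
     - (ebr E (s z) (s (bg x y)) + ebr E (s (bg x y)) (s z))
     + s (bg (bg x y) z - bg (bg x z) y + bg (bg y z) x)"
    unfolding dCE2_def by (simp del: SI_br add: I_r I_om algebra_simps)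
  also have "\<dots> = 0" using e_jac g_jac e.antisym[of "s (bg y z)" "s x"] e.antisym[of "s (bg x z)" "s y"] e.antisym[of "s (bg x y)" "s z"] by simp
  finally show ?thesis by simp
qed

lemma cocycle2: "partial1 bg D \<rho> ch x y + T2 D K om x y = 0"
proof -
  have A: "einc E (K u) = eD E (einc E u)" for u by simp
  have "einc E (partial1 bg D \<rho> ch x y + T2 D K om x y) =
      ebr E (s x) (eD E (s y) - s (D y)) - ebr E (s y) (eD E (s x) - s (D x))
    + ebr E (s (D x)) (eD E (s y) - s (D y)) - ebr E (s (D y)) (eD E (s x) - s (D x))
    - (eD E (s (bg x y)) - s (D (bg x y)))
    + (ebr E (s (D x)) (s y) - s (bg (D x) y)) + (ebr E (s x) (s (D y)) - s (bg x (D y)))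
    + (ebr E (s (D x)) (s (D y)) - s (bg (D x) (D y)))
    - eD E (ebr E (s x) (s y) - s (bg x y))"
    unfolding partial1_def T2_def
    by (simp del: SI_br DE_I add: A I_r I_om I_ch)
  also have "\<dots> = 0"
    apply (simp only: DE_diff DE_br)
    apply (simp add: DE_S D_br e.antisym[of "s (D x)" "s y"] e.antisym[of "s (D x)" "s (D y)"] g.antisym[of "D x" y])
    done
  finally show ?thesis by (simp only: I_eq0)
qed

end


context sec_ctx begin

lemma om_lin1: "Vector_Spaces.linear sg sh (\<lambda>x. om x y)"
  unfolding ext_omega_def
  by (rule lin_inv[OF lin_sub[OF lin_comp[OF linS e.linL] lin_comp[OF g.linL linS]] linI injI])
     (auto simp: rangeI)
lemma om_lin2: "Vector_Spaces.linear sg sh (om x)"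
  unfolding ext_omega_def
  by (rule lin_inv[OF lin_sub[OF lin_comp[OF linS e.linR] lin_comp[OF g.linR linS]] linI injI])
     (auto simp: rangeI)
lemma ch_lin: "Vector_Spaces.linear sg sh ch"
  unfolding ext_chi_def
  by (rule lin_inv[OF lin_sub[OF lin_comp[OF linS linDE] lin_comp[OF linD linS]] linI injI])
     (auto simp: rangeI)
lemma om_alt: "om x x = 0"
  using I_om[of x x] by simp

lemma cocycle_Z2: "(om, ch) \<in> Z2 sg bg D sh K \<rho>"
  unfolding Z2_def cochain2_def
  using om_lin1 om_lin2 ch_lin om_alt cocycle1 cocycle2 by simp

end

context ext_ctx begin

lemma sec_change:
  assumes s: "lin_section sg E s" and s': "lin_section sg E s'"
  shows "cls2 sg bg D sh K \<rho> (ext_omega bg E s', ext_chi D E s') = cls2 sg bg D sh K \<rho> (ext_omega bg E s, ext_chi D E s)"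
proof -
  interpret a: sec_ctx sg bg D sh K \<rho> E s using s by unfold_locales
  interpret b: sec_ctx sg bg D sh K \<rho> E s' using s' by unfold_locales
  define f where "f x = inv (einc E) (s' x - s x)" for x
  have fl: "Vector_Spaces.linear sg sh f"
    unfolding f_def[abs_def]
    by (rule lin_inv[OF lin_sub[OF b.linS a.linS] linI injI]) (auto simp: rangeI)
  have If: "einc E (f x) = s' x - s x" for x unfolding f_def by (rule I_inv) simp
  have s'e: "s' x = s x + einc E (f x)" for x using If[of x] by (simp add: algebra_simps)
  show ?thesis
  proof (rule cls2_shift[OF fl])
    fix x y
    have "einc E (ext_omega bg E s' x y) = einc E (ext_omega bg E s x y + fst (cob1 bg D K \<rho> f) x y)"
      unfolding b.I_om by (simp add: s'e a.SS_br cob1_def algebra_simps)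
    then show "fst (ext_omega bg E s', ext_chi D E s') x y =
        fst (ext_omega bg E s, ext_chi D E s) x y + fst (cob1 bg D K \<rho> f) x y" by (simp only: I_eq fst_conv snd_conv)
  next
    fix x
    have "einc E (ext_chi D E s' x) = einc E (ext_chi D E s x + snd (cob1 bg D K \<rho> f) x)"
      unfolding b.I_ch by (simp add: s'e a.DE_S cob1_def algebra_simps)
    then show "snd (ext_omega bg E s', ext_chi D E s') x =
        snd (ext_omega bg E s, ext_chi D E s) x + snd (cob1 bg D K \<rho> f) x" by (simp only: I_eq fst_conv snd_conv)
  qed
qed

lemma some_sec: "lin_section sg E (SOME s. lin_section sg E s)"
  using sec_exists by (rule someI_ex)

lemma part1:
  "ext_class sg bg D sh K \<rho> E \<in> H2 sg bg D sh K \<rho>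
   \<and> (\<forall>s. lin_section sg E s \<longrightarrow>
        (ext_omega bg E s, ext_chi D E s) \<in> Z2 sg bg D sh K \<rho>
        \<and> cls2 sg bg D sh K \<rho> (ext_omega bg E s, ext_chi D E s) = ext_class sg bg D sh K \<rho> E)"
proof -
  have Z: "(ext_omega bg E s, ext_chi D E s) \<in> Z2 sg bg D sh K \<rho>" if "lin_section sg E s" for s
  proof -
    interpret a: sec_ctx sg bg D sh K \<rho> E s using that by unfold_locales
    show ?thesis by (rule a.cocycle_Z2)
  qed
  have C: "cls2 sg bg D sh K \<rho> (ext_omega bg E s, ext_chi D E s) = ext_class sg bg D sh K \<rho> E"
    if "lin_section sg E s" for s
    unfolding ext_class_def Let_def by (rule sec_change[OF some_sec that])
  show ?thesis
    using Z C some_sec unfolding H2_def by (metis image_eqI)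
qed

end


context sec_ctx begin
abbreviation "prj e \<equiv> inv (einc E) (e - s (eproj E e))"
lemma pi_lin: "Vector_Spaces.linear (esc E) sh (\<lambda>e. inv (einc E) (e - s (eproj E e)))"
  by (rule lin_inv[OF lin_sub[OF lin_id[OF e.vs] lin_comp[OF linP linS]] linI injI]) (auto simp: rangeI)
lemma pi_form[simp]: "inv (einc E) (s x + einc E w - s (eproj E (s x + einc E w))) = w" by simp
lemma decomp_ex: "\<exists>x w. e = s x + einc E w" using decomp by blast
end

lemma iso_of_eq:
  assumes A: "sec_ctx sg bg D sh K \<rho> E1 u1" and B: "sec_ctx sg bg D sh K \<rho> E2 u2"
    and om: "\<And>x y. ext_omega bg E1 u1 x y = ext_omega bg E2 u2 x y"
    and ch: "\<And>x. ext_chi D E1 u1 x = ext_chi D E2 u2 x"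
  shows "ext_iso E1 E2"
proof -
  interpret a: sec_ctx sg bg D sh K \<rho> E1 u1 by (rule A)
  interpret b: sec_ctx sg bg D sh K \<rho> E2 u2 by (rule B)
  define k where "k e = u1 (eproj E2 e) + einc E1 (b.prj e)" for e
  define k' where "k' e = u2 (eproj E1 e) + einc E2 (a.prj e)" for e
  have kf: "k (u2 x + einc E2 w) = u1 x + einc E1 w" for x w unfolding k_def by simp
  have kf': "k' (u1 x + einc E1 w) = u2 x + einc E2 w" for x w unfolding k'_def by simp
  have kk: "k' (k e) = e" for e
    using b.decomp_ex[of e] kf kf' by auto
  have kk': "k (k' e) = e" for e
    using a.decomp_ex[of e] kf kf' by auto
  have bij: "bij k" by (rule o_bij[of k']) (auto simp: fun_eq_iff kk kk')
  have lin: "Vector_Spaces.linear (esc E2) (esc E1) k"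
    unfolding k_def[abs_def]
    by (rule lin_plus[OF lin_comp[OF b.linP a.linS] lin_comp[OF b.pi_lin a.linI]])
  have br: "k (ebr E2 e f) = ebr E1 (k e) (k f)" for e f
  proof -
    obtain x w where e: "e = u2 x + einc E2 w" using b.decomp_ex by blast
    obtain y v where f: "f = u2 y + einc E2 v" using b.decomp_ex by blast
    show ?thesis unfolding e f kf b.br_formula a.br_formula om ..
  qed
  have dd: "eD E1 (k e) = k (eD E2 e)" for e
  proof -
    obtain x w where e: "e = u2 x + einc E2 w" using b.decomp_ex by blast
    show ?thesis unfolding e kf b.D_formula a.D_formula ch ..
  qed
  have inc: "k (einc E2 w) = einc E1 w" for w using kf[of 0 w] by simp
  have pr: "eproj E1 (k e) = eproj E2 e" for e
  proof -
    obtain x w where e: "e = u2 x + einc E2 w" using b.decomp_ex by blast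
    show ?thesis unfolding e kf by simp
  qed
  show ?thesis unfolding ext_iso_def using bij lin br dd inc pr by blast
qed



lemma iso_class:
  assumes A: "ext_ctx sg bg D sh K \<rho> E1" and B: "ext_ctx sg bg D sh K \<rho> E2"
    and iso: "ext_iso E1 E2"
  shows "ext_class sg bg D sh K \<rho> E1 = ext_class sg bg D sh K \<rho> E2"
proof -
  interpret a: ext_ctx sg bg D sh K \<rho> E1 by (rule A)
  interpret b: ext_ctx sg bg D sh K \<rho> E2 by (rule B)
  obtain k where k: "Vector_Spaces.linear (esc E2) (esc E1) k"
      "\<And>a b. k (ebr E2 a b) = ebr E1 (k a) (k b)"
      "\<And>a. eD E1 (k a) = k (eD E2 a)"
      "\<And>u. k (einc E2 u) = einc E1 u"
      "\<And>a. eproj E1 (k a) = eproj E2 a"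
    using iso unfolding ext_iso_def by blast
  obtain s2 where s2: "lin_section sg E2 s2" using b.sec_exists by blast
  interpret s2: sec_ctx sg bg D sh K \<rho> E2 s2 using s2 by unfold_locales
  have s1: "lin_section sg E1 (\<lambda>x. k (s2 x))"
    unfolding lin_section_def using lin_comp[OF s2.linS k(1)] k(5) by simp
  interpret s1: sec_ctx sg bg D sh K \<rho> E1 "\<lambda>x. k (s2 x)" using s1 by unfold_locales
  have om: "ext_omega bg E1 (\<lambda>x. k (s2 x)) x y = ext_omega bg E2 s2 x y" for x y
  proof -
    have "einc E1 (ext_omega bg E1 (\<lambda>x. k (s2 x)) x y) = ebr E1 (k (s2 x)) (k (s2 y)) - k (s2 (bg x y))"
      by (rule s1.I_om)
    also have "\<dots> = k (ebr E2 (s2 x) (s2 y) - s2 (bg x y))" by (simp add: k(2) lin_diff[OF k(1)])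
    also have "\<dots> = k (einc E2 (ext_omega bg E2 s2 x y))" by (simp only: s2.I_om)
    also have "\<dots> = einc E1 (ext_omega bg E2 s2 x y)" by (rule k(4))
    finally show ?thesis by (simp only: a.I_eq)
  qed
  have ch: "ext_chi D E1 (\<lambda>x. k (s2 x)) x = ext_chi D E2 s2 x" for x
  proof -
    have "einc E1 (ext_chi D E1 (\<lambda>x. k (s2 x)) x) = eD E1 (k (s2 x)) - k (s2 (D x))"
      by (rule s1.I_ch)
    also have "\<dots> = k (eD E2 (s2 x) - s2 (D x))" by (simp add: k(3) lin_diff[OF k(1)])
    also have "\<dots> = k (einc E2 (ext_chi D E2 s2 x))" by (simp only: s2.I_ch)
    also have "\<dots> = einc E1 (ext_chi D E2 s2 x)" by (rule k(4))
    finally show ?thesis by (simp only: a.I_eq)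
  qed
  have "ext_class sg bg D sh K \<rho> E1 = cls2 sg bg D sh K \<rho> (ext_omega bg E1 (\<lambda>x. k (s2 x)), ext_chi D E1 (\<lambda>x. k (s2 x)))"
    using a.part1 s1 by simp
  also have "\<dots> = cls2 sg bg D sh K \<rho> (ext_omega bg E2 s2, ext_chi D E2 s2)"
  proof -
    have e1: "ext_omega bg E1 (\<lambda>x. k (s2 x)) = ext_omega bg E2 s2" using om by (intro ext)
    have e2: "ext_chi D E1 (\<lambda>x. k (s2 x)) = ext_chi D E2 s2" using ch by (intro ext)
    show ?thesis by (simp only: e1 e2)
  qed
  also have "\<dots> = ext_class sg bg D sh K \<rho> E2" using b.part1 s2 by simp
  finally show ?thesis .
qed

lemma class_iso:
  assumes A: "ext_ctx sg bg D sh K \<rho> E1" and B: "ext_ctx sg bg D sh K \<rho> E2"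
    and eq: "ext_class sg bg D sh K \<rho> E1 = ext_class sg bg D sh K \<rho> E2"
  shows "ext_iso E1 E2"
proof -
  interpret a: ext_ctx sg bg D sh K \<rho> E1 by (rule A)
  interpret b: ext_ctx sg bg D sh K \<rho> E2 by (rule B)
  obtain t1 where t1: "lin_section sg E1 t1" using a.sec_exists by blast
  obtain t2 where t2: "lin_section sg E2 t2" using b.sec_exists by blast
  interpret t1: sec_ctx sg bg D sh K \<rho> E1 t1 using t1 by unfold_locales
  interpret t2: sec_ctx sg bg D sh K \<rho> E2 t2 using t2 by unfold_locales
  have "(ext_omega bg E1 t1, ext_chi D E1 t1) \<in> cls2 sg bg D sh K \<rho> (ext_omega bg E2 t2, ext_chi D E2 t2)"
    using a.part1 b.part1 t1 t2 eq t1.cocycle_Z2 a.cls2_mem_self by metis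
  then obtain f where f: "Vector_Spaces.linear sg sh f"
    "\<And>x y. ext_omega bg E1 t1 x y = ext_omega bg E2 t2 x y + fst (cob1 bg D K \<rho> f) x y"
    "\<And>x. ext_chi D E1 t1 x = ext_chi D E2 t2 x + snd (cob1 bg D K \<rho> f) x"
    unfolding cls2_def by auto
  define t where "t x = t1 x - einc E1 (f x)" for x
  have tl: "lin_section sg E1 t"
    unfolding lin_section_def t_def[abs_def]
    using lin_sub[OF t1.linS lin_comp[OF f(1) a.linI]] by simp
  interpret t: sec_ctx sg bg D sh K \<rho> E1 t using tl by unfold_locales
  have om: "ext_omega bg E1 t x y = ext_omega bg E2 t2 x y" for x y
  proof -
    have "einc E1 (ext_omega bg E1 t x y) = einc E1 (ext_omega bg E1 t1 x y - fst (cob1 bg D K \<rho> f) x y)"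
      unfolding t.I_om by (simp add: t_def t1.SS_br cob1_def algebra_simps)
    then show ?thesis using f(2) by simp
  qed
  have ch: "ext_chi D E1 t x = ext_chi D E2 t2 x" for x
  proof -
    have "einc E1 (ext_chi D E1 t x) = einc E1 (ext_chi D E1 t1 x - snd (cob1 bg D K \<rho> f) x)"
      unfolding t.I_ch by (simp add: t_def t1.DE_S cob1_def algebra_simps)
    then show ?thesis using f(3) by simp
  qed
  show ?thesis by (rule iso_of_eq[OF t.sec_ctx_axioms t2.sec_ctx_axioms om ch])
qed



locale cocyc = rep_ctx sg bg D sh K \<rho>
  for sg :: "'k::field \<Rightarrow> 'g::ab_group_add \<Rightarrow> 'g" and bg D and sh :: "'k \<Rightarrow> 'h::ab_group_add \<Rightarrow> 'h" and K \<rho> +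
  fixes \<omega> :: "'g \<Rightarrow> 'g \<Rightarrow> 'h" and \<chi> :: "'g \<Rightarrow> 'h"
  assumes Z: "(\<omega>, \<chi>) \<in> Z2 sg bg D sh K \<rho>"
begin
lemma wL: "Vector_Spaces.linear sg sh (\<lambda>x. \<omega> x y)" using Z by (simp add: Z2_def cochain2_def)
lemma wR: "Vector_Spaces.linear sg sh (\<omega> x)" using Z by (simp add: Z2_def cochain2_def)
lemma chl: "Vector_Spaces.linear sg sh \<chi>" using Z by (simp add: Z2_def cochain2_def)
lemma w_alt[simp]: "\<omega> x x = 0" using Z by (simp add: Z2_def cochain2_def)
lemma dce: "dCE2 bg \<rho> \<omega> x y z = 0" using Z by (simp add: Z2_def)
lemma cc2: "partial1 bg D \<rho> \<chi> x y + T2 D K \<omega> x y = 0" using Z by (simp add: Z2_def)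
lemma w_addL[simp]: "\<omega> (x + y) z = \<omega> x z + \<omega> y z" using lin_add[OF wL] by simp
lemma w_addR[simp]: "\<omega> z (x + y) = \<omega> z x + \<omega> z y" using lin_add[OF wR] by simp
lemma w_diffL[simp]: "\<omega> (x - y) z = \<omega> x z - \<omega> y z" using lin_diff[OF wL] by simp
lemma w_diffR[simp]: "\<omega> z (x - y) = \<omega> z x - \<omega> z y" using lin_diff[OF wR] by simp
lemma w_negL[simp]: "\<omega> (- x) z = - \<omega> x z" using lin_neg[OF wL] by simp
lemma w_negR[simp]: "\<omega> z (- x) = - \<omega> z x" using lin_neg[OF wR] by simp
lemma w_0L[simp]: "\<omega> 0 z = 0" using lin_0[OF wL] by simp
lemma w_0R[simp]: "\<omega> z 0 = 0" using lin_0[OF wR] by simp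
lemma c_add[simp]: "\<chi> (x + y) = \<chi> x + \<chi> y" by (rule lin_add[OF chl])
lemma c_diff[simp]: "\<chi> (x - y) = \<chi> x - \<chi> y" by (rule lin_diff[OF chl])
lemma c_neg[simp]: "\<chi> (- x) = - \<chi> x" by (rule lin_neg[OF chl])
lemma c_0[simp]: "\<chi> 0 = 0" by (rule lin_0[OF chl])
lemma w_anti: "\<omega> y x = - \<omega> x y"
proof -
  have e: "\<omega> (x + y) (x + y) = \<omega> x x + \<omega> y x + (\<omega> x y + \<omega> y y)" by (simp only: w_addL w_addR)
  have "\<omega> x y + \<omega> y x = 0" using e by (simp add: algebra_simps)
  then show ?thesis by (simp add: eq_neg_iff_add_eq_0 add.commute)
qed

definition sc :: "'k \<Rightarrow> 'g \<times> 'h \<Rightarrow> 'g \<times> 'h" where "sc c p = (sg c (fst p), sh c (snd p))"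
definition br :: "'g \<times> 'h \<Rightarrow> 'g \<times> 'h \<Rightarrow> 'g \<times> 'h" where
  "br p q = (bg (fst p) (fst q), \<rho> (fst p) (snd q) - \<rho> (fst q) (snd p) + \<omega> (fst p) (fst q))"
definition dd :: "'g \<times> 'h \<Rightarrow> 'g \<times> 'h" where "dd p = (D (fst p), \<chi> (fst p) + K (snd p))"
definition E0 :: "('k, 'g, 'h, 'g \<times> 'h) abext" where
  "E0 = \<lparr>esc = sc, ebr = br, eD = dd, einc = (\<lambda>u. (0, u)), eproj = fst\<rparr>"

lemma mg: "module sg" using vsg by (simp add: module_iff_vector_space)
lemma mh: "module sh" using vsh by (simp add: module_iff_vector_space)

lemma vs_sc: "vector_space sc"
  unfolding vector_space_def sc_def
  using module.scale_right_distrib[OF mg] module.scale_right_distrib[OF mh]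
    module.scale_left_distrib[OF mg] module.scale_left_distrib[OF mh]
    module.scale_scale[OF mg] module.scale_scale[OF mh]
    module.scale_one[OF mg] module.scale_one[OF mh]
  by (simp add: prod_eq_iff)

lemma r_scL: "\<rho> (sg c x) u = sh c (\<rho> x u)" using lin_scale[OF linL] by simp
lemma r_scR: "\<rho> x (sh c u) = sh c (\<rho> x u)" using lin_scale[OF linR] by simp
lemma w_scL: "\<omega> (sg c x) y = sh c (\<omega> x y)" using lin_scale[OF wL] by simp
lemma w_scR: "\<omega> x (sg c y) = sh c (\<omega> x y)" using lin_scale[OF wR] by simp
lemma c_sc: "\<chi> (sg c x) = sh c (\<chi> x)" using lin_scale[OF chl] by simp
lemma K_sc: "K (sh c x) = sh c (K x)" using lin_scale[OF linK] by simp
lemma D_sc: "D (sg c x) = sg c (D x)" using lin_scale[OF linD] by simp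
lemmas hdist = module.scale_right_distrib[OF mh] module.scale_right_diff_distrib[OF mh]

lemma br_linL: "Vector_Spaces.linear sc sc (\<lambda>p. br p q)"
  unfolding Vector_Spaces.linear_iff using vs_sc
  by (simp add: br_def sc_def prod_eq_iff g.scaleL r_scL r_scR w_scL hdist algebra_simps)
lemma br_linR: "Vector_Spaces.linear sc sc (br p)"
  unfolding Vector_Spaces.linear_iff using vs_sc
  by (simp add: br_def sc_def prod_eq_iff g.scaleR r_scL r_scR w_scR hdist algebra_simps)
lemma dd_lin: "Vector_Spaces.linear sc sc dd"
  unfolding Vector_Spaces.linear_iff using vs_sc
  by (simp add: dd_def sc_def prod_eq_iff D_sc c_sc K_sc hdist algebra_simps)

lemma br_jac: "br x (br y z) + br y (br z x) + br z (br x y) = 0"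
proof -
  obtain x1 x2 y1 y2 z1 z2 where p: "x = (x1, x2)" "y = (y1, y2)" "z = (z1, z2)" by (cases x, cases y, cases z) auto
  have "\<rho> x1 (\<omega> y1 z1) - \<rho> y1 (\<omega> x1 z1) + \<rho> z1 (\<omega> x1 y1)
      - \<omega> (bg x1 y1) z1 + \<omega> (bg x1 z1) y1 - \<omega> (bg y1 z1) x1 = 0" using dce unfolding dCE2_def .
  then show ?thesis unfolding p
    using g.jacobi[of x1 y1 z1] w_anti[of z1 x1] w_anti[of x1 "bg y1 z1"] w_anti[of z1 "bg x1 y1"]
      w_anti[of y1 "bg z1 x1"] g.antisym[of x1 z1]
    by (simp add: br_def r_br algebra_simps zero_prod_def)
qed

lemma lie0: "lie_algebra sc br"
  unfolding lie_algebra_def using vs_sc br_linL br_linR br_jac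
  by (simp add: br_def prod_eq_iff)

lemma dl0: "diff_lie sc br dd"
proof -
  have "dd (br p q) = br p (dd q) - br q (dd p) + br (dd p) (dd q)" for p q
  proof -
    obtain x u y v where p: "p = (x, u)" "q = (y, v)" by (cases p, cases q) auto
    have "\<rho> x (\<chi> y) - \<rho> y (\<chi> x) + \<rho> (D x) (\<chi> y) - \<rho> (D y) (\<chi> x) - \<chi> (bg x y)
      + (\<omega> (D x) y + \<omega> x (D y) + \<omega> (D x) (D y) - K (\<omega> x y)) = 0"
      using cc2[of x y] unfolding partial1_def T2_def .
    then show ?thesis unfolding p
      using D_br[of x y] K_r[of x v] K_r[of y u] w_anti[of "D x" y]
      by (simp add: br_def dd_def algebra_simps)
  qed
  then show ?thesis unfolding diff_lie_def using lie0 dd_lin by simp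
qed

lemma inc_lin: "Vector_Spaces.linear sh sc (\<lambda>u. (0, u))"
  unfolding Vector_Spaces.linear_iff using vs_sc vsh
  by (simp add: sc_def prod_eq_iff module.scale_zero_right[OF mg])
lemma proj_lin: "Vector_Spaces.linear sc sg fst"
  unfolding Vector_Spaces.linear_iff using vs_sc vsg by (simp add: sc_def)

lemma ab0: "abelian_ext sg bg D sh K E0"
  unfolding abelian_ext_def E0_def using dl0 inc_lin proj_lin
  by (auto simp: inj_def surj_def br_def dd_def zero_prod_def image_def intro: exI[of _ "(_, 0)"])

lemma ind0: "induces_rep sg \<rho> E0"
  unfolding induces_rep_def E0_def lin_section_def by (simp add: br_def)

lemma class0: "ext_class sg bg D sh K \<rho> E0 = cls2 sg bg D sh K \<rho> (\<omega>, \<chi>)"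
proof -
  interpret e: ext_ctx sg bg D sh K \<rho> E0 using ab0 ind0 by unfold_locales
  have s0: "lin_section sg E0 (\<lambda>x. (x, 0))"
    unfolding lin_section_def E0_def Vector_Spaces.linear_iff using vs_sc vsg
    by (simp add: sc_def module.scale_zero_right[OF mh])
  have "ext_omega bg E0 (\<lambda>x. (x, 0)) = \<omega>"
    by (auto simp: fun_eq_iff ext_omega_def E0_def br_def intro!: inv_f_eq injI)
  moreover have "ext_chi D E0 (\<lambda>x. (x, 0)) = \<chi>"
    by (auto simp: fun_eq_iff ext_chi_def E0_def dd_def intro!: inv_f_eq injI)
  ultimately show ?thesis using e.part1 s0 by metis
qed

end


theorem theorem4p17:
  fixes sg :: "'k::field \<Rightarrow> 'g::ab_group_add \<Rightarrow> 'g"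
    and bg :: "'g \<Rightarrow> 'g \<Rightarrow> 'g" and D :: "'g \<Rightarrow> 'g"
    and sh :: "'k \<Rightarrow> 'h::ab_group_add \<Rightarrow> 'h" and K :: "'h \<Rightarrow> 'h"
    and \<rho> :: "'g \<Rightarrow> 'h \<Rightarrow> 'h"
  assumes "diff_lie sg bg D"
    and "vector_space sh"
    and "Vector_Spaces.linear sh sh K"
    and "diff_rep sg bg D sh K \<rho>"
  shows
    "(\<forall>E :: ('k, 'g, 'h, 'e::ab_group_add) abext.
        abelian_ext sg bg D sh K E \<and> induces_rep sg \<rho> E \<longrightarrow>
          ext_class sg bg D sh K \<rho> E \<in> H2 sg bg D sh K \<rho>
          \<and> (\<forall>s. lin_section sg E s \<longrightarrow>
                (ext_omega bg E s, ext_chi D E s) \<in> Z2 sg bg D sh K \<rho>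
                \<and> cls2 sg bg D sh K \<rho> (ext_omega bg E s, ext_chi D E s)
                    = ext_class sg bg D sh K \<rho> E))
     \<and> (\<forall>(E1 :: ('k, 'g, 'h, 'e1::ab_group_add) abext) (E2 :: ('k, 'g, 'h, 'e2::ab_group_add) abext).
        abelian_ext sg bg D sh K E1 \<and> induces_rep sg \<rho> E1 \<and>
        abelian_ext sg bg D sh K E2 \<and> induces_rep sg \<rho> E2 \<longrightarrow>
          (ext_class sg bg D sh K \<rho> E1 = ext_class sg bg D sh K \<rho> E2 \<longleftrightarrow> ext_iso E1 E2))
     \<and> (\<forall>c \<in> H2 sg bg D sh K \<rho>. \<exists>E :: ('k, 'g, 'h, 'g \<times> 'h) abext.
          abelian_ext sg bg D sh K E \<and> induces_rep sg \<rho> E \<and> ext_class sg bg D sh K \<rho> E = c)"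
proof (intro conjI allI impI ballI)
  interpret r: rep_ctx sg bg D sh K \<rho> using assms(4) by unfold_locales
  fix E :: "('k, 'g, 'h, 'e::ab_group_add) abext"
  assume "abelian_ext sg bg D sh K E \<and> induces_rep sg \<rho> E"
  then interpret e: ext_ctx sg bg D sh K \<rho> E by unfold_locales auto
  show "ext_class sg bg D sh K \<rho> E \<in> H2 sg bg D sh K \<rho>" using e.part1 by blast
  fix s assume "lin_section sg E s"
  then show "(ext_omega bg E s, ext_chi D E s) \<in> Z2 sg bg D sh K \<rho>"
     "cls2 sg bg D sh K \<rho> (ext_omega bg E s, ext_chi D E s) = ext_class sg bg D sh K \<rho> E"
    using e.part1 by blast+
next
  interpret r: rep_ctx sg bg D sh K \<rho> using assms(4) by unfold_locales
  fix E1 :: "('k, 'g, 'h, 'e1::ab_group_add) abext" and E2 :: "('k, 'g, 'h, 'e2::ab_group_add) abext"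
  assume h: "abelian_ext sg bg D sh K E1 \<and> induces_rep sg \<rho> E1 \<and>
        abelian_ext sg bg D sh K E2 \<and> induces_rep sg \<rho> E2"
  have A: "ext_ctx sg bg D sh K \<rho> E1" using h by unfold_locales auto
  have B: "ext_ctx sg bg D sh K \<rho> E2" using h by unfold_locales auto
  show "ext_class sg bg D sh K \<rho> E1 = ext_class sg bg D sh K \<rho> E2 \<longleftrightarrow> ext_iso E1 E2"
    using iso_class[OF A B] class_iso[OF A B] by blast
next
  fix c assume "c \<in> H2 sg bg D sh K \<rho>"
  then obtain c0 where c0: "c0 \<in> Z2 sg bg D sh K \<rho>" "c = cls2 sg bg D sh K \<rho> c0"
    unfolding H2_def by blast
  obtain w x where cw: "c0 = (w, x)" by (cases c0)
  interpret z: cocyc sg bg D sh K \<rho> w x using assms(4) c0(1) cw by unfold_locales auto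
  show "\<exists>E :: ('k, 'g, 'h, 'g \<times> 'h) abext.
          abelian_ext sg bg D sh K E \<and> induces_rep sg \<rho> E \<and> ext_class sg bg D sh K \<rho> E = c"
    using z.ab0 z.ind0 z.class0 c0(2) cw by blast
qed

end
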